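(* If $X,Y,Z$ are independent real-valued continuous random variables, then $$h(X+Y+Z)+h(Y)\leq h(X+Y)+h(Y+Z),$$ and this is equivalent to the mutual information inequality $$I(X+Y+Z;X)\leq I(X+Y;X).$$
   Context: Standing conventions: all random variables are real-valued with densities (random vectors have joint densities), and every differential entropy appearing is assumed to exist and be finite. $h$ denotes differential entropy and $I(U;V)=h(U)+h(V)-h(U,V)$ mutual information. *)

theory Defs
  imports "HOL-Probability.Probability"
begin

definition dent :: "'a measure \<Rightarrow> 'b measure \<Rightarrow> ('a \<Rightarrow> 'b) \<Rightarrow> real" where
  "dent M S U = prob_space.entropy M (exp 1) S U"

definition has_finite_dent :: "'a measure \<Rightarrow> 'b measure \<Rightarrow> ('a \<Rightarrow> 'b) \<Rightarrow> bool" where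
  "has_finite_dent M S U \<longleftrightarrow> (\<exists>f. information_space.finite_entropy M (exp 1) S U f)"

definition mutinf :: "'a measure \<Rightarrow> ('a \<Rightarrow> real) \<Rightarrow> ('a \<Rightarrow> real) \<Rightarrow> real" where
  "mutinf M U V = dent M lborel U + dent M lborel V
      - dent M (lborel \<Otimes>\<^sub>M lborel) (\<lambda>\<omega>. (U \<omega>, V \<omega>))"

end

theory Submission
  imports Defs
begin

lemma infsp: "prob_space M \<Longrightarrow> information_space M (exp 1)"
  by (simp add: information_space_def information_space_axioms_def)

lemma dent_expect:
  assumes P: "prob_space M" and F: "information_space.finite_entropy M (exp 1) S V p"
  shows "dent M S V = - (\<integral>\<omega>. ln (p (V \<omega>)) \<partial>M)"
    and "integrable M (\<lambda>\<omega>. ln (p (V \<omega>)))"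
proof -
  interpret information_space M "exp 1" using infsp[OF P] .
  have D: "distributed M S V p" and nn: "\<And>x. x \<in> space S \<Longrightarrow> 0 \<le> p x"
    and I: "integrable S (\<lambda>x. p x * log (exp 1) (p x))"
    using F by (auto simp: finite_entropy_def)
  have pm[measurable]: "p \<in> borel_measurable S" using finite_entropy_measurable[OF F] .
  have "dent M S V = - (\<integral>x. p x * log (exp 1) (p x) \<partial>S)"
    unfolding dent_def by (rule entropy_distr[OF D nn])
  also have "(\<integral>x. p x * log (exp 1) (p x) \<partial>S) = (\<integral>\<omega>. log (exp 1) (p (V \<omega>)) \<partial>M)"
    by (rule distributed_integral[OF D _ nn]) simp
  finally show "dent M S V = - (\<integral>\<omega>. ln (p (V \<omega>)) \<partial>M)" by (simp add: log_def)
  have "integrable M (\<lambda>\<omega>. log (exp 1) (p (V \<omega>)))"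
    using distributed_integrable[OF D _ nn, of "\<lambda>x. log (exp 1) (p x)"] I by simp
  then show "integrable M (\<lambda>\<omega>. ln (p (V \<omega>)))" by (simp add: log_def)
qed

lemma fe_pos:
  assumes P: "prob_space M" and F: "information_space.finite_entropy M (exp 1) S V p"
  shows "AE \<omega> in M. 0 < p (V \<omega>)"
proof -
  interpret information_space M "exp 1" using infsp[OF P] .
  have D: "distributed M S V p" using F by (auto simp: finite_entropy_def)
  have pm[measurable]: "p \<in> borel_measurable S" using finite_entropy_measurable[OF F] .
  show ?thesis using distributed_AE2[OF D, of "\<lambda>x. 0 < p x"] by simp
qed

lemma dist_AE:
  assumes "prob_space M" "distributed M N V f" "Measurable.pred N P" "AE x in N. P x"
  shows "AE \<omega> in M. P (V \<omega>)"
proof -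
  interpret prob_space M by fact
  show ?thesis using distributed_AE2[OF assms(2,3)] assms(4) by (auto elim: AE_mp)
qed

lemma indep3:
  fixes Xs :: "nat \<Rightarrow> 'a \<Rightarrow> real"
  assumes P: "prob_space M" and ind: "prob_space.indep_vars M (\<lambda>_. borel) Xs {0,1,2}"
    and AB: "A \<inter> B = {}" "A \<subseteq> {0,1,2}" "B \<subseteq> {0,1,2}"
    and F: "F \<in> measurable (PiM A (\<lambda>_. borel)) N1" and G: "G \<in> measurable (PiM B (\<lambda>_. borel)) N2"
  shows "prob_space.indep_var M N1 (\<lambda>\<omega>. F (restrict (\<lambda>i. Xs i \<omega>) A)) N2 (\<lambda>\<omega>. G (restrict (\<lambda>i. Xs i \<omega>) B))"
proof -
  interpret prob_space M by fact
  show ?thesis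
    using indep_var_compose[OF indep_var_restrict[OF ind AB] F G] by (simp add: comp_def)
qed

lemma triple:
  fixes X Y Z :: "'a \<Rightarrow> real"
  assumes P: "prob_space M" and ind: "prob_space.indep_vars M (\<lambda>_. borel)
           (\<lambda>i::nat. if i = 0 then X else if i = 1 then Y else Z) {0, 1, 2}"
  shows "distr M lborel X \<Otimes>\<^sub>M distr M (lborel \<Otimes>\<^sub>M lborel) (\<lambda>\<omega>. (Y \<omega>, Z \<omega>))
     = distr M (lborel \<Otimes>\<^sub>M (lborel \<Otimes>\<^sub>M lborel)) (\<lambda>\<omega>. (X \<omega>, (Y \<omega>, Z \<omega>)))"
proof -
  interpret prob_space M by fact
  define Xs where "Xs = (\<lambda>i::nat. if i = 0 then X else if i = 1 then Y else Z)"
  have ind': "indep_vars (\<lambda>_. borel) Xs {0,1,2}" using ind by (simp add: Xs_def)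
  have rvX[measurable]: "X \<in> borel_measurable M" and rvY[measurable]: "Y \<in> borel_measurable M"
     and rvZ[measurable]: "Z \<in> borel_measurable M"
  proof -
    have "\<forall>i\<in>{0,1,2}. random_variable borel (Xs i)" using ind' by (simp add: indep_vars_def)
    then show "X \<in> borel_measurable M" "Y \<in> borel_measurable M" "Z \<in> borel_measurable M"
      by (auto simp: Xs_def)
  qed
  let ?P0 = "PiM {0::nat} (\<lambda>_. borel :: real measure)" and ?P12 = "PiM {1::nat,2} (\<lambda>_. borel :: real measure)"
  let ?R0 = "\<lambda>\<omega>. restrict (\<lambda>i. Xs i \<omega>) {0}" and ?R12 = "\<lambda>\<omega>. restrict (\<lambda>i. Xs i \<omega>) {1,2}"
  have iv: "indep_var ?P0 ?R0 ?P12 ?R12"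
    by (rule indep_var_restrict[OF ind']) auto
  have R0[measurable]: "?R0 \<in> measurable M ?P0" and R12[measurable]: "?R12 \<in> measurable M ?P12"
    by (rule indep_var_rv1[OF iv], rule indep_var_rv2[OF iv])
  have eq1: "distr M ?P0 ?R0 \<Otimes>\<^sub>M distr M ?P12 ?R12 = distr M (?P0 \<Otimes>\<^sub>M ?P12) (\<lambda>\<omega>. (?R0 \<omega>, ?R12 \<omega>))"
    using iv by (simp add: indep_var_distribution_eq)
  define f where "f = (\<lambda>h::nat\<Rightarrow>real. h 0)"
  define g where "g = (\<lambda>h::nat\<Rightarrow>real. (h 1, h 2))"
  have fm[measurable]: "f \<in> measurable ?P0 lborel" unfolding f_def by measurable
  have gm[measurable]: "g \<in> measurable ?P12 (lborel \<Otimes>\<^sub>M lborel)" unfolding g_def by measurable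
  have dX: "distr M lborel X = distr (distr M ?P0 ?R0) lborel f"
    by (subst distr_distr[OF fm R0]) (auto simp: f_def Xs_def comp_def intro!: distr_cong)
  have dYZ: "distr M (lborel \<Otimes>\<^sub>M lborel) (\<lambda>\<omega>. (Y \<omega>, Z \<omega>)) = distr (distr M ?P12 ?R12) (lborel \<Otimes>\<^sub>M lborel) g"
    by (subst distr_distr[OF gm R12]) (auto simp: g_def Xs_def comp_def intro!: distr_cong)
  have sf: "sigma_finite_measure (distr (distr M ?P12 ?R12) (lborel \<Otimes>\<^sub>M lborel) g)"
  proof -
    have "prob_space (distr (distr M ?P12 ?R12) (lborel \<Otimes>\<^sub>M lborel) g)"
    proof -
      interpret D12: prob_space "distr M ?P12 ?R12" by (rule prob_space_distr[OF R12])
      show ?thesis by (rule D12.prob_space_distr) (use gm in simp)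
    qed
    then show ?thesis by (simp add: prob_space_imp_sigma_finite)
  qed
  have "distr M lborel X \<Otimes>\<^sub>M distr M (lborel \<Otimes>\<^sub>M lborel) (\<lambda>\<omega>. (Y \<omega>, Z \<omega>))
     = distr (distr M ?P0 ?R0 \<Otimes>\<^sub>M distr M ?P12 ?R12) (lborel \<Otimes>\<^sub>M (lborel \<Otimes>\<^sub>M lborel)) (\<lambda>(x, y). (f x, g y))"
    unfolding dX dYZ by (rule pair_measure_distr[OF _ _ sf]) (use fm gm in simp_all)
  also have "\<dots> = distr M (lborel \<Otimes>\<^sub>M (lborel \<Otimes>\<^sub>M lborel)) (\<lambda>\<omega>. (X \<omega>, (Y \<omega>, Z \<omega>)))"
  proof -
    have RR: "(\<lambda>\<omega>. (?R0 \<omega>, ?R12 \<omega>)) \<in> measurable M (?P0 \<Otimes>\<^sub>M ?P12)"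
      using R0 R12 by (rule measurable_Pair)
    have FG: "(\<lambda>(x, y). (f x, g y)) \<in> measurable (?P0 \<Otimes>\<^sub>M ?P12) (lborel \<Otimes>\<^sub>M (lborel \<Otimes>\<^sub>M lborel))"
      by measurable
    show ?thesis
    by (subst eq1, subst distr_distr[OF FG RR]) (auto simp: f_def g_def Xs_def comp_def intro!: distr_cong)
  qed
  finally show ?thesis .
qed

lemma shear:
  assumes P: "prob_space M"
    and D: "distributed M (lborel \<Otimes>\<^sub>M lborel) (\<lambda>\<omega>. (A \<omega>, B \<omega>)) d"
  shows "distributed M (lborel \<Otimes>\<^sub>M lborel) (\<lambda>\<omega>. (A \<omega> + B \<omega>, B \<omega> :: real)) (\<lambda>(s, x). d (s - x, x))"
proof -
  interpret prob_space M by fact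
  have dm[measurable]: "d \<in> borel_measurable (lborel \<Otimes>\<^sub>M lborel)"
    using distributed_borel_measurable[OF D] by simp
  have AB[measurable]: "(\<lambda>\<omega>. (A \<omega>, B \<omega>)) \<in> measurable M (lborel \<Otimes>\<^sub>M lborel)"
    using distributed_measurable[OF D] .
  have Am[measurable]: "A \<in> borel_measurable M" and Bm[measurable]: "B \<in> borel_measurable M"
    using measurable_compose[OF AB measurable_fst] measurable_compose[OF AB measurable_snd] by (auto simp: comp_def)
  define T where "T = (\<lambda>p::real\<times>real. (fst p + snd p, snd p))"
  have Tm[measurable]: "T \<in> measurable (lborel \<Otimes>\<^sub>M lborel) (lborel \<Otimes>\<^sub>M lborel)"
    unfolding T_def by measurable
  have e1: "distr M (lborel \<Otimes>\<^sub>M lborel) (\<lambda>\<omega>. (A \<omega> + B \<omega>, B \<omega>)) =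
      distr (distr M (lborel \<Otimes>\<^sub>M lborel) (\<lambda>\<omega>. (A \<omega>, B \<omega>))) (lborel \<Otimes>\<^sub>M lborel) T"
    by (subst distr_distr) (auto simp: T_def comp_def intro!: distr_cong)
  have e2: "distr (density (lborel \<Otimes>\<^sub>M lborel) d) (lborel \<Otimes>\<^sub>M lborel) T
      = density (lborel \<Otimes>\<^sub>M lborel) (\<lambda>(s, x). d (s - x, x))"
  proof (rule measure_eqI)
    fix E assume "E \<in> sets (distr (density (lborel \<Otimes>\<^sub>M lborel) d) (lborel \<Otimes>\<^sub>M lborel) T)"
    then have E[measurable]: "E \<in> sets (lborel \<Otimes>\<^sub>M lborel)" by simp
    have E': "E \<in> sets (borel \<Otimes>\<^sub>M borel)" using E by (metis sets_lborel sets_pair_measure_cong)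
    have "emeasure (distr (density (lborel \<Otimes>\<^sub>M lborel) d) (lborel \<Otimes>\<^sub>M lborel) T) E
        = (\<integral>\<^sup>+p. d p * indicator E (T p) \<partial>(lborel \<Otimes>\<^sub>M lborel))"
    proof -
      have TE: "T -` E \<inter> space (density (lborel \<Otimes>\<^sub>M lborel) d) \<in> sets (lborel \<Otimes>\<^sub>M lborel)"
        using measurable_sets[OF Tm E] by (simp add: space_pair_measure)
      have "emeasure (distr (density (lborel \<Otimes>\<^sub>M lborel) d) (lborel \<Otimes>\<^sub>M lborel) T) E
          = emeasure (density (lborel \<Otimes>\<^sub>M lborel) d) (T -` E \<inter> space (density (lborel \<Otimes>\<^sub>M lborel) d))"
        by (rule emeasure_distr) (use Tm E in auto)
      also have "\<dots> = (\<integral>\<^sup>+p. d p * indicator (T -` E \<inter> space (density (lborel \<Otimes>\<^sub>M lborel) d)) p \<partial>(lborel \<Otimes>\<^sub>M lborel))"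
        by (rule emeasure_density[OF dm TE])
      finally show ?thesis
        by (simp add: space_pair_measure indicator_def)
    qed
    also have "\<dots> = (\<integral>\<^sup>+x. \<integral>\<^sup>+a. d (a, x) * indicator E (a + x, x) \<partial>lborel \<partial>lborel)"
      by (subst lborel_pair.nn_integral_snd[symmetric]) (auto simp: T_def)
    also have "\<dots> = (\<integral>\<^sup>+x. \<integral>\<^sup>+s. d (s - x, x) * indicator E (s, x) \<partial>lborel \<partial>lborel)"
    proof -
      have "(\<integral>\<^sup>+a. d (a, x) * indicator E (a + x, x) \<partial>lborel) = (\<integral>\<^sup>+s. d (s - x, x) * indicator E (s, x) \<partial>lborel)" for x :: real
        using nn_integral_real_affine[of "\<lambda>s. d (s - x, x) * indicator E (s, x)" 1 x]
        by (simp add: add.commute)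
      then show ?thesis by simp
    qed
    also have "\<dots> = (\<integral>\<^sup>+p. (\<lambda>(s, x). d (s - x, x)) p * indicator E p \<partial>(lborel \<Otimes>\<^sub>M lborel))"
      by (subst lborel_pair.nn_integral_snd[symmetric]) (auto simp: split_beta')
    also have "\<dots> = emeasure (density (lborel \<Otimes>\<^sub>M lborel) (\<lambda>(s, x). d (s - x, x))) E"
      by (subst emeasure_density) (auto simp: ac_simps E')
    finally show "emeasure (distr (density (lborel \<Otimes>\<^sub>M lborel) d) (lborel \<Otimes>\<^sub>M lborel) T) E
        = emeasure (density (lborel \<Otimes>\<^sub>M lborel) (\<lambda>(s, x). d (s - x, x))) E" .
  qed simp
  show ?thesis
    unfolding distributed_def
  proof (intro conjI)
    show "distr M (lborel \<Otimes>\<^sub>M lborel) (\<lambda>\<omega>. (A \<omega> + B \<omega>, B \<omega>)) = density (lborel \<Otimes>\<^sub>M lborel) (\<lambda>(s, x). d (s - x, x))"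
      unfolding e1 distributed_distr_eq_density[OF D] e2 ..
  qed simp_all
qed

lemma pair_dent:
  fixes A B :: "'a \<Rightarrow> real"
  assumes P: "prob_space M"
    and FA: "information_space.finite_entropy M (exp 1) lborel A a"
    and FB: "information_space.finite_entropy M (exp 1) lborel B bb"
    and ind: "prob_space.indep_var M lborel A lborel B"
    and FQ: "information_space.finite_entropy M (exp 1) (lborel \<Otimes>\<^sub>M lborel) (\<lambda>\<omega>. (A \<omega> + B \<omega>, B \<omega>)) q"
  shows "dent M (lborel \<Otimes>\<^sub>M lborel) (\<lambda>\<omega>. (A \<omega> + B \<omega>, B \<omega>)) = dent M lborel A + dent M lborel B"
proof -
  interpret information_space M "exp 1" using infsp[OF P] .
  have DA: "distributed M lborel A a" and DB: "distributed M lborel B bb"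
    and DQ: "distributed M (lborel \<Otimes>\<^sub>M lborel) (\<lambda>\<omega>. (A \<omega> + B \<omega>, B \<omega>)) q"
    using FA FB FQ by (auto simp: finite_entropy_def)
  have Am[measurable]: "A \<in> borel_measurable M" using distributed_measurable[OF DA] by simp
  have Bm[measurable]: "B \<in> borel_measurable M" using distributed_measurable[OF DB] by simp
  have am[measurable]: "a \<in> borel_measurable lborel" using finite_entropy_measurable[OF FA] .
  have bm[measurable]: "bb \<in> borel_measurable lborel" using finite_entropy_measurable[OF FB] .
  have qm[measurable]: "q \<in> borel_measurable (lborel \<Otimes>\<^sub>M lborel)" using finite_entropy_measurable[OF FQ] .
  have ann: "\<And>x. 0 \<le> a x" using finite_entropy_nn[OF FA] by simp
  have bnn: "\<And>x. 0 \<le> bb x" using finite_entropy_nn[OF FB] by simp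
  have qnn: "\<And>x. 0 \<le> q x" using finite_entropy_nn[OF FQ] by (simp add: space_pair_measure)
  have J: "distributed M (lborel \<Otimes>\<^sub>M lborel) (\<lambda>\<omega>. (A \<omega>, B \<omega>)) (\<lambda>(x, y). ennreal (a x) * ennreal (bb y))"
    by (rule distributed_joint_indep[OF _ _ DA DB ind]) (simp_all add: lborel.sigma_finite_measure_axioms)
  have J2: "distributed M (lborel \<Otimes>\<^sub>M lborel) (\<lambda>\<omega>. (A \<omega> + B \<omega>, B \<omega>)) (\<lambda>(s, x). ennreal (a (s - x)) * ennreal (bb x))"
    using shear[OF P J] by (simp add: split_beta')
  have ae1: "AE p in lborel \<Otimes>\<^sub>M lborel. ennreal (q p) = ennreal (a (fst p - snd p)) * ennreal (bb (snd p))"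
    using distributed_unique[OF DQ J2] by (simp add: split_beta')
  have ae2: "AE \<omega> in M. ennreal (q (A \<omega> + B \<omega>, B \<omega>)) = ennreal (a (A \<omega> + B \<omega> - B \<omega>)) * ennreal (bb (B \<omega>))"
    using dist_AE[OF P DQ _ ae1] by simp
  have ae3: "AE \<omega> in M. ln (q (A \<omega> + B \<omega>, B \<omega>)) = ln (a (A \<omega>)) + ln (bb (B \<omega>))"
    using ae2 fe_pos[OF P FA] fe_pos[OF P FB]
  proof eventually_elim
    case (elim \<omega>)
    then have "q (A \<omega> + B \<omega>, B \<omega>) = a (A \<omega>) * bb (B \<omega>)"
      using ann bnn qnn by (simp add: ennreal_mult[symmetric])
    with elim show ?case by (simp add: ln_mult)
  qed
  have "dent M (lborel \<Otimes>\<^sub>M lborel) (\<lambda>\<omega>. (A \<omega> + B \<omega>, B \<omega>)) = - (\<integral>\<omega>. ln (q (A \<omega> + B \<omega>, B \<omega>)) \<partial>M)"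
    using dent_expect(1)[OF P FQ] .
  also have "(\<integral>\<omega>. ln (q (A \<omega> + B \<omega>, B \<omega>)) \<partial>M) = (\<integral>\<omega>. ln (a (A \<omega>)) + ln (bb (B \<omega>)) \<partial>M)"
    by (rule integral_cong_AE) (use ae3 in auto)
  also have "\<dots> = (\<integral>\<omega>. ln (a (A \<omega>)) \<partial>M) + (\<integral>\<omega>. ln (bb (B \<omega>)) \<partial>M)"
    by (rule Bochner_Integration.integral_add) (use dent_expect(2)[OF P FA] dent_expect(2)[OF P FB] in auto)
  finally show ?thesis
    using dent_expect(1)[OF P FA] dent_expect(1)[OF P FB] by simp
qed

lemma indeps:
  fixes X Y Z :: "'a \<Rightarrow> real"
  assumes P: "prob_space M" and ind: "prob_space.indep_vars M (\<lambda>_. borel)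
           (\<lambda>i::nat. if i = 0 then X else if i = 1 then Y else Z) {0, 1, 2}"
  shows I2: "prob_space.indep_var M lborel Y lborel Z"
    and I3: "prob_space.indep_var M borel (\<lambda>\<omega>. Y \<omega> + Z \<omega>) borel X"
    and I4: "prob_space.indep_var M borel (\<lambda>\<omega>. X \<omega> + Y \<omega>) borel Z"
    and I5: "prob_space.indep_var M lborel (\<lambda>\<omega>. Y \<omega> + Z \<omega>) lborel X"
    and I6: "prob_space.indep_var M lborel Y lborel X"
proof -
  show "prob_space.indep_var M lborel Y lborel Z"
    using indep3[OF P ind, of "{1}" "{2}" "\<lambda>f. f 1" lborel "\<lambda>f. f 2" lborel]
    by simp
  show "prob_space.indep_var M borel (\<lambda>\<omega>. Y \<omega> + Z \<omega>) borel X"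
    using indep3[OF P ind, of "{1,2}" "{0}" "\<lambda>f. f 1 + f 2" borel "\<lambda>f. f 0" borel]
    by simp
  show "prob_space.indep_var M borel (\<lambda>\<omega>. X \<omega> + Y \<omega>) borel Z"
    using indep3[OF P ind, of "{0,1}" "{2}" "\<lambda>f. f 0 + f 1" borel "\<lambda>f. f 2" borel]
    by simp
  show "prob_space.indep_var M lborel (\<lambda>\<omega>. Y \<omega> + Z \<omega>) lborel X"
    using indep3[OF P ind, of "{1,2}" "{0}" "\<lambda>f. f 1 + f 2" lborel "\<lambda>f. f 0" lborel]
    by simp
  show "prob_space.indep_var M lborel Y lborel X"
    using indep3[OF P ind, of "{1}" "{0}" "\<lambda>f. f 1" lborel "\<lambda>f. f 0" lborel]
    by simp
qed

lemma core:
  fixes X Y Z :: "'a \<Rightarrow> real"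
  assumes P: "prob_space M" and ind: "prob_space.indep_vars M (\<lambda>_. borel)
           (\<lambda>i::nat. if i = 0 then X else if i = 1 then Y else Z) {0, 1, 2}"
    and FX: "information_space.finite_entropy M (exp 1) lborel X fx"
    and FY: "information_space.finite_entropy M (exp 1) lborel Y g"
    and FU: "information_space.finite_entropy M (exp 1) lborel (\<lambda>\<omega>. X \<omega> + Y \<omega>) u"
    and FW: "information_space.finite_entropy M (exp 1) lborel (\<lambda>\<omega>. Y \<omega> + Z \<omega>) w"
    and FS: "information_space.finite_entropy M (exp 1) lborel (\<lambda>\<omega>. X \<omega> + Y \<omega> + Z \<omega>) s"
    and DZ: "distributed M lborel Z k"
  shows "(\<integral>\<^sup>+\<omega>. ennreal (u (X \<omega> + Y \<omega>) * w (Y \<omega> + Z \<omega>) * (1 / s (X \<omega> + Y \<omega> + Z \<omega>)) * (1 / g (Y \<omega>))) \<partial>M) \<le> 1"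
proof -
  interpret information_space M "exp 1" using infsp[OF P] .
  have DX: "distributed M lborel X fx" and DY: "distributed M lborel Y g"
    and DU: "distributed M lborel (\<lambda>\<omega>. X \<omega> + Y \<omega>) u"
    and DW: "distributed M lborel (\<lambda>\<omega>. Y \<omega> + Z \<omega>) w"
    and DS: "distributed M lborel (\<lambda>\<omega>. X \<omega> + Y \<omega> + Z \<omega>) s"
    using FX FY FU FW FS by (auto simp: finite_entropy_def)
  have fxm[measurable]: "fx \<in> borel_measurable lborel" using finite_entropy_measurable[OF FX] .
  have gm[measurable]: "g \<in> borel_measurable lborel" using finite_entropy_measurable[OF FY] .
  have um[measurable]: "u \<in> borel_measurable lborel" using finite_entropy_measurable[OF FU] .
  have wm[measurable]: "w \<in> borel_measurable lborel" using finite_entropy_measurable[OF FW] .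
  have sm[measurable]: "s \<in> borel_measurable lborel" using finite_entropy_measurable[OF FS] .
  have km[measurable]: "k \<in> borel_measurable lborel" using distributed_borel_measurable[OF DZ] .
  have fxm'[measurable]: "fx \<in> borel_measurable borel" using fxm by simp
  have gm'[measurable]: "g \<in> borel_measurable borel" using gm by simp
  have um'[measurable]: "u \<in> borel_measurable borel" using um by simp
  have wm'[measurable]: "w \<in> borel_measurable borel" using wm by simp
  have sm'[measurable]: "s \<in> borel_measurable borel" using sm by simp
  have km'[measurable]: "k \<in> borel_measurable borel" using km by simp
  have fxnn: "\<And>x. 0 \<le> fx x" using finite_entropy_nn[OF FX] by simp
  have gnn: "\<And>x. 0 \<le> g x" using finite_entropy_nn[OF FY] by simp
  have unn: "\<And>x. 0 \<le> u x" using finite_entropy_nn[OF FU] by simp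
  have wnn: "\<And>x. 0 \<le> w x" using finite_entropy_nn[OF FW] by simp
  have snn: "\<And>x. 0 \<le> s x" using finite_entropy_nn[OF FS] by simp
  have sfL: "sigma_finite_measure lborel" by (simp add: lborel.sigma_finite_measure_axioms)
  have sfL2: "sigma_finite_measure (lborel \<Otimes>\<^sub>M lborel)" by (intro sigma_finite_pair_measure sfL)
  have DYZ: "distributed M (lborel \<Otimes>\<^sub>M lborel) (\<lambda>\<omega>. (Y \<omega>, Z \<omega>)) (\<lambda>(y, z). ennreal (g y) * k z)"
    by (rule distributed_joint_indep[OF sfL sfL DY DZ I2[OF P ind]])
  have DXYZ: "distributed M (lborel \<Otimes>\<^sub>M (lborel \<Otimes>\<^sub>M lborel)) (\<lambda>\<omega>. (X \<omega>, (Y \<omega>, Z \<omega>)))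
      (\<lambda>(x, p). ennreal (fx x) * (\<lambda>(y, z). ennreal (g y) * k z) p)"
    by (rule distributed_joint_indep'[OF sfL sfL2 DX DYZ triple[OF P ind]])
  define H where "H = (\<lambda>(x, y, z). ennreal (u (x + y) * w (y + z) * (1 / s (x + y + z)) * (1 / g y)))"
  have Hm[measurable]: "H \<in> borel_measurable (lborel \<Otimes>\<^sub>M (lborel \<Otimes>\<^sub>M lborel))"
    unfolding H_def by measurable
  define K where "K = (\<lambda>x y z. ennreal (fx x) * k z * ennreal (u (x + y)) * ennreal (w (y + z)) * ennreal (1 / s (x + y + z)))"
  define K2 where "K2 = (\<lambda>x z t. ennreal (fx x) * k z * ennreal (u (t - z)) * ennreal (w (t - x)) * ennreal (1 / s t))"
  define CA where "CA = (\<lambda>t. \<integral>\<^sup>+y. ennreal (w (t - y)) * ennreal (fx y) \<partial>lborel)"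
  define CB where "CB = (\<lambda>t. \<integral>\<^sup>+y. ennreal (u (t - y)) * k y \<partial>lborel)"
  have "(\<integral>\<^sup>+\<omega>. ennreal (u (X \<omega> + Y \<omega>) * w (Y \<omega> + Z \<omega>) * (1 / s (X \<omega> + Y \<omega> + Z \<omega>)) * (1 / g (Y \<omega>))) \<partial>M)
      = (\<integral>\<^sup>+\<omega>. H (X \<omega>, (Y \<omega>, Z \<omega>)) \<partial>M)"
    by (simp add: H_def)
  also have "\<dots> = (\<integral>\<^sup>+p. (\<lambda>(x, p). ennreal (fx x) * (\<lambda>(y, z). ennreal (g y) * k z) p) p * H p \<partial>(lborel \<Otimes>\<^sub>M (lborel \<Otimes>\<^sub>M lborel)))"
    by (rule distributed_nn_integral[OF DXYZ Hm, symmetric])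
  also have "\<dots> = (\<integral>\<^sup>+x. \<integral>\<^sup>+p. ennreal (fx x) * (ennreal (g (fst p)) * k (snd p)) * H (x, p) \<partial>(lborel \<Otimes>\<^sub>M lborel) \<partial>lborel)"
    by (subst sigma_finite_measure.nn_integral_fst[OF sfL2, symmetric]) (auto simp: split_beta')
  also have "\<dots> = (\<integral>\<^sup>+x. \<integral>\<^sup>+y. \<integral>\<^sup>+z. ennreal (fx x) * (ennreal (g y) * k z) * H (x, (y, z)) \<partial>lborel \<partial>lborel \<partial>lborel)"
  proof (intro nn_integral_cong)
    fix x :: real
    show "(\<integral>\<^sup>+p. ennreal (fx x) * (ennreal (g (fst p)) * k (snd p)) * H (x, p) \<partial>(lborel \<Otimes>\<^sub>M lborel))
      = (\<integral>\<^sup>+y. \<integral>\<^sup>+z. ennreal (fx x) * (ennreal (g y) * k z) * H (x, (y, z)) \<partial>lborel \<partial>lborel)"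
      by (subst sigma_finite_measure.nn_integral_fst[OF sfL, symmetric]) auto
  qed
  also have "\<dots> \<le> (\<integral>\<^sup>+x. \<integral>\<^sup>+y. \<integral>\<^sup>+z. K x y z \<partial>lborel \<partial>lborel \<partial>lborel)"
  proof (intro nn_integral_mono)
    fix x y z :: real
    have "ennreal (g y) * ennreal (u (x + y) * w (y + z) * (1 / s (x + y + z)) * (1 / g y))
        \<le> ennreal (u (x + y)) * ennreal (w (y + z)) * ennreal (1 / s (x + y + z))"
    proof (cases "g y = 0")
      case True then show ?thesis by simp
    next
      case False
      then have "g y * (u (x + y) * w (y + z) * (1 / s (x + y + z)) * (1 / g y)) = u (x + y) * w (y + z) * (1 / s (x + y + z))"
        by (simp add: field_simps)
      then show ?thesis
        using gnn unn wnn snn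
        by (simp add: ennreal_mult[symmetric] del: ennreal_mult)
    qed
    then have "ennreal (fx x) * k z * (ennreal (g y) * ennreal (u (x + y) * w (y + z) * (1 / s (x + y + z)) * (1 / g y)))
        \<le> ennreal (fx x) * k z * (ennreal (u (x + y)) * ennreal (w (y + z)) * ennreal (1 / s (x + y + z)))"
      by (rule mult_left_mono) simp
    then show "ennreal (fx x) * (ennreal (g y) * k z) * H (x, y, z) \<le> K x y z"
      by (simp add: H_def K_def ac_simps)
  qed
  also have "\<dots> = (\<integral>\<^sup>+x. \<integral>\<^sup>+z. \<integral>\<^sup>+y. K x y z \<partial>lborel \<partial>lborel \<partial>lborel)"
    by (intro nn_integral_cong lborel_pair.Fubini'[symmetric]) (simp add: K_def)
  also have "\<dots> = (\<integral>\<^sup>+x. \<integral>\<^sup>+z. \<integral>\<^sup>+t. K2 x z t \<partial>lborel \<partial>lborel \<partial>lborel)"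
  proof -
    have *: "(\<integral>\<^sup>+y. K x y z \<partial>lborel) = (\<integral>\<^sup>+t. K2 x z t \<partial>lborel)" for x z :: real
    proof -
      have e: "K x (- (x + z) + t) z = K2 x z t" for t
      proof -
        have "x + (- (x + z) + t) = t - z" "- (x + z) + t + z = t - x" "x + (- (x + z) + t) + z = t" by simp_all
        then show ?thesis unfolding K_def K2_def by simp
      qed
      show ?thesis
        using nn_integral_real_affine[of "\<lambda>y. K x y z" 1 "- (x + z)"] by (simp add: e K_def K2_def)
    qed
    show ?thesis by (simp add: *)
  qed
  also have "\<dots> = (\<integral>\<^sup>+x. \<integral>\<^sup>+t. \<integral>\<^sup>+z. K2 x z t \<partial>lborel \<partial>lborel \<partial>lborel)"
    by (intro nn_integral_cong lborel_pair.Fubini'[symmetric]) (simp add: K2_def)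
  also have "\<dots> = (\<integral>\<^sup>+t. \<integral>\<^sup>+x. \<integral>\<^sup>+z. K2 x z t \<partial>lborel \<partial>lborel \<partial>lborel)"
    by (intro lborel_pair.Fubini'[symmetric]) (simp add: K2_def)
  also have "\<dots> = (\<integral>\<^sup>+t. CA t * ennreal (1 / s t) * CB t \<partial>lborel)"
  proof (intro nn_integral_cong)
    fix t :: real
    have "(\<integral>\<^sup>+z. K2 x z t \<partial>lborel) = (ennreal (w (t - x)) * ennreal (fx x)) * (ennreal (1 / s t) * CB t)" for x
    proof -
      have "(\<integral>\<^sup>+z. K2 x z t \<partial>lborel) = (\<integral>\<^sup>+z. (ennreal (w (t - x)) * ennreal (fx x) * ennreal (1 / s t)) * (ennreal (u (t - z)) * k z) \<partial>lborel)"
        by (simp add: K2_def ac_simps)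
      also have "\<dots> = (ennreal (w (t - x)) * ennreal (fx x) * ennreal (1 / s t)) * CB t"
        unfolding CB_def by (rule nn_integral_cmult) simp
      finally show ?thesis by (simp add: ac_simps)
    qed
    then have "(\<integral>\<^sup>+x. \<integral>\<^sup>+z. K2 x z t \<partial>lborel \<partial>lborel) = (\<integral>\<^sup>+x. (ennreal (w (t - x)) * ennreal (fx x)) * (ennreal (1 / s t) * CB t) \<partial>lborel)"
      by simp
    also have "\<dots> = CA t * (ennreal (1 / s t) * CB t)"
      unfolding CA_def by (rule nn_integral_multc) simp
    finally show "(\<integral>\<^sup>+x. \<integral>\<^sup>+z. K2 x z t \<partial>lborel \<partial>lborel) = CA t * ennreal (1 / s t) * CB t"
      by (simp add: ac_simps)
  qed
  also have "\<dots> \<le> (\<integral>\<^sup>+t. ennreal (s t) \<partial>lborel)"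
  proof (rule nn_integral_mono_AE)
    have eqS: "(\<lambda>\<omega>. Y \<omega> + Z \<omega> + X \<omega>) = (\<lambda>\<omega>. X \<omega> + Y \<omega> + Z \<omega>)" by (auto simp: fun_eq_iff)
    have cA: "distributed M lborel (\<lambda>\<omega>. X \<omega> + Y \<omega> + Z \<omega>) CA"
      using distributed_convolution[OF I3[OF P ind] DW DX] unfolding eqS CA_def .
    have cB: "distributed M lborel (\<lambda>\<omega>. X \<omega> + Y \<omega> + Z \<omega>) CB"
      using distributed_convolution[OF I4[OF P ind] DU DZ] unfolding CB_def .
    show "AE t in lborel. CA t * ennreal (1 / s t) * CB t \<le> ennreal (s t)"
      using distributed_unique[OF cA DS] distributed_unique[OF cB DS]
    proof eventually_elim
      case (elim t)
      have "CA t * ennreal (1 / s t) * CB t = ennreal (s t * (1 / s t) * s t)"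
        using elim snn[of t] by (simp add: ennreal_mult[symmetric] del: ennreal_mult)
      also have "\<dots> \<le> ennreal (s t)"
        using snn[of t] by (intro ennreal_leI) (cases "s t = 0", auto)
      finally show ?case .
    qed
  qed
  also have "\<dots> = 1"
  proof -
    have "(\<integral>\<^sup>+t. ennreal (s t) * 1 \<partial>lborel) = (\<integral>\<^sup>+\<omega>. 1 \<partial>M)"
      by (rule distributed_nn_integral[OF DS]) simp
    then show ?thesis by (simp add: emeasure_space_1)
  qed
  finally show ?thesis .
qed

theorem mainTheorem4:
  fixes M :: "'a measure" and X Y Z :: "'a \<Rightarrow> real"
  assumes "prob_space M"
    and "prob_space.indep_vars M (\<lambda>_. borel)
           (\<lambda>i::nat. if i = 0 then X else if i = 1 then Y else Z) {0, 1, 2}"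
    and "\<exists>f. distributed M lborel X f"
    and "\<exists>f. distributed M lborel Y f"
    and "\<exists>f. distributed M lborel Z f"
    and "has_finite_dent M lborel X"
    and "has_finite_dent M lborel Y"
    and "has_finite_dent M lborel (\<lambda>\<omega>. X \<omega> + Y \<omega>)"
    and "has_finite_dent M lborel (\<lambda>\<omega>. Y \<omega> + Z \<omega>)"
    and "has_finite_dent M lborel (\<lambda>\<omega>. X \<omega> + Y \<omega> + Z \<omega>)"
    and "has_finite_dent M (lborel \<Otimes>\<^sub>M lborel) (\<lambda>\<omega>. (X \<omega> + Y \<omega> + Z \<omega>, X \<omega>))"
    and "has_finite_dent M (lborel \<Otimes>\<^sub>M lborel) (\<lambda>\<omega>. (X \<omega> + Y \<omega>, X \<omega>))"
  shows "dent M lborel (\<lambda>\<omega>. X \<omega> + Y \<omega> + Z \<omega>) + dent M lborel Y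
           \<le> dent M lborel (\<lambda>\<omega>. X \<omega> + Y \<omega>) + dent M lborel (\<lambda>\<omega>. Y \<omega> + Z \<omega>)
         \<and> ((dent M lborel (\<lambda>\<omega>. X \<omega> + Y \<omega> + Z \<omega>) + dent M lborel Y
              \<le> dent M lborel (\<lambda>\<omega>. X \<omega> + Y \<omega>) + dent M lborel (\<lambda>\<omega>. Y \<omega> + Z \<omega>))
            \<longleftrightarrow> mutinf M (\<lambda>\<omega>. X \<omega> + Y \<omega> + Z \<omega>) X \<le> mutinf M (\<lambda>\<omega>. X \<omega> + Y \<omega>) X)"
proof -
  note P = assms(1) and ind = assms(2)
  interpret information_space M "exp 1" using infsp[OF P] .
  obtain k where DZ: "distributed M lborel Z k" using assms(5) by blast
  obtain fx where FX: "finite_entropy lborel X fx" using assms(6) by (auto simp: has_finite_dent_def)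
  obtain g where FY: "finite_entropy lborel Y g" using assms(7) by (auto simp: has_finite_dent_def)
  obtain u where FU: "finite_entropy lborel (\<lambda>\<omega>. X \<omega> + Y \<omega>) u" using assms(8) by (auto simp: has_finite_dent_def)
  obtain w where FW: "finite_entropy lborel (\<lambda>\<omega>. Y \<omega> + Z \<omega>) w" using assms(9) by (auto simp: has_finite_dent_def)
  obtain s where FS: "finite_entropy lborel (\<lambda>\<omega>. X \<omega> + Y \<omega> + Z \<omega>) s" using assms(10) by (auto simp: has_finite_dent_def)
  obtain q1 where FQ1: "finite_entropy (lborel \<Otimes>\<^sub>M lborel) (\<lambda>\<omega>. (X \<omega> + Y \<omega> + Z \<omega>, X \<omega>)) q1"
    using assms(11) by (auto simp: has_finite_dent_def)
  obtain q2 where FQ2: "finite_entropy (lborel \<Otimes>\<^sub>M lborel) (\<lambda>\<omega>. (X \<omega> + Y \<omega>, X \<omega>)) q2"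
    using assms(12) by (auto simp: has_finite_dent_def)
  have DX: "distributed M lborel X fx" and DY: "distributed M lborel Y g"
    and DU: "distributed M lborel (\<lambda>\<omega>. X \<omega> + Y \<omega>) u"
    and DW: "distributed M lborel (\<lambda>\<omega>. Y \<omega> + Z \<omega>) w"
    and DS: "distributed M lborel (\<lambda>\<omega>. X \<omega> + Y \<omega> + Z \<omega>) s"
    using FX FY FU FW FS by (auto simp: finite_entropy_def)
  have [measurable]: "X \<in> borel_measurable M" using distributed_measurable[OF DX] by simp
  have [measurable]: "Y \<in> borel_measurable M" using distributed_measurable[OF DY] by simp
  have [measurable]: "Z \<in> borel_measurable M" using distributed_measurable[OF DZ] by simp
  have [measurable]: "g \<in> borel_measurable borel" using finite_entropy_measurable[OF FY] by simp
  have [measurable]: "u \<in> borel_measurable borel" using finite_entropy_measurable[OF FU] by simp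
  have [measurable]: "w \<in> borel_measurable borel" using finite_entropy_measurable[OF FW] by simp
  have [measurable]: "s \<in> borel_measurable borel" using finite_entropy_measurable[OF FS] by simp
  have gnn: "\<And>x. 0 \<le> g x" using finite_entropy_nn[OF FY] by simp
  have unn: "\<And>x. 0 \<le> u x" using finite_entropy_nn[OF FU] by simp
  have wnn: "\<And>x. 0 \<le> w x" using finite_entropy_nn[OF FW] by simp
  have snn: "\<And>x. 0 \<le> s x" using finite_entropy_nn[OF FS] by simp
  define R where "R = (\<lambda>\<omega>. u (X \<omega> + Y \<omega>) * w (Y \<omega> + Z \<omega>) * (1 / s (X \<omega> + Y \<omega> + Z \<omega>)) * (1 / g (Y \<omega>)))"
  have Rm[measurable]: "R \<in> borel_measurable M" unfolding R_def by measurable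
  have Rnn: "\<And>\<omega>. 0 \<le> R \<omega>" unfolding R_def using gnn unn wnn snn by simp
  have Rle: "(\<integral>\<^sup>+\<omega>. ennreal (R \<omega>) \<partial>M) \<le> 1"
    unfolding R_def by (rule core[OF P ind FX FY FU FW FS DZ])
  have Rint: "integrable M R"
    by (rule integrableI_nonneg) (use Rnn Rle in \<open>auto simp: top_unique intro: le_less_trans\<close>)
  have RE: "(\<integral>\<omega>. R \<omega> \<partial>M) \<le> 1"
  proof -
    have "(\<integral>\<omega>. R \<omega> \<partial>M) = enn2real (\<integral>\<^sup>+\<omega>. ennreal (R \<omega>) \<partial>M)"
      by (rule integral_eq_nn_integral) (use Rnn in auto)
    also have "\<dots> \<le> enn2real 1"
      by (rule enn2real_mono[OF Rle]) simp
    finally show ?thesis by simp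
  qed
  define L where "L = (\<lambda>\<omega>. ln (u (X \<omega> + Y \<omega>)) + ln (w (Y \<omega> + Z \<omega>)) - ln (s (X \<omega> + Y \<omega> + Z \<omega>)) - ln (g (Y \<omega>)))"
  note iU = dent_expect(2)[OF P FU] and iW = dent_expect(2)[OF P FW]
    and iS = dent_expect(2)[OF P FS] and iY = dent_expect(2)[OF P FY]
  have Lint: "integrable M L" unfolding L_def using iU iW iS iY by auto
  have LE: "(\<integral>\<omega>. L \<omega> \<partial>M) = (\<integral>\<omega>. ln (u (X \<omega> + Y \<omega>)) \<partial>M) + (\<integral>\<omega>. ln (w (Y \<omega> + Z \<omega>)) \<partial>M)
      - (\<integral>\<omega>. ln (s (X \<omega> + Y \<omega> + Z \<omega>)) \<partial>M) - (\<integral>\<omega>. ln (g (Y \<omega>)) \<partial>M)"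
    unfolding L_def using iU iW iS iY by simp
  have "AE \<omega> in M. L \<omega> \<le> R \<omega> - 1"
    using fe_pos[OF P FU] fe_pos[OF P FW] fe_pos[OF P FS] fe_pos[OF P FY]
  proof eventually_elim
    case (elim \<omega>)
    have "L \<omega> = ln (R \<omega>)"
      using elim unfolding L_def R_def by (simp add: ln_mult ln_div)
    also have "\<dots> \<le> R \<omega> - 1"
      by (rule ln_le_minus_one) (use elim in \<open>simp add: R_def\<close>)
    finally show ?case .
  qed
  then have "(\<integral>\<omega>. L \<omega> \<partial>M) \<le> (\<integral>\<omega>. R \<omega> - 1 \<partial>M)"
    by (intro integral_mono_AE Lint) (use Rint in auto)
  also have "\<dots> = (\<integral>\<omega>. R \<omega> \<partial>M) - 1"
    using Rint by (simp add: prob_space)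
  finally have main: "(\<integral>\<omega>. L \<omega> \<partial>M) \<le> 0" using RE by simp
  have first: "dent M lborel (\<lambda>\<omega>. X \<omega> + Y \<omega> + Z \<omega>) + dent M lborel Y
           \<le> dent M lborel (\<lambda>\<omega>. X \<omega> + Y \<omega>) + dent M lborel (\<lambda>\<omega>. Y \<omega> + Z \<omega>)"
    using main LE dent_expect(1)[OF P FU] dent_expect(1)[OF P FW] dent_expect(1)[OF P FS]
      dent_expect(1)[OF P FY] by simp
  have e1: "(\<lambda>\<omega>. (X \<omega> + Y \<omega> + Z \<omega>, X \<omega>)) = (\<lambda>\<omega>. (Y \<omega> + Z \<omega> + X \<omega>, X \<omega>))"
    by (auto simp: fun_eq_iff)
  have e2: "(\<lambda>\<omega>. (X \<omega> + Y \<omega>, X \<omega>)) = (\<lambda>\<omega>. (Y \<omega> + X \<omega>, X \<omega>))"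
    by (auto simp: fun_eq_iff)
  have h1: "dent M (lborel \<Otimes>\<^sub>M lborel) (\<lambda>\<omega>. (X \<omega> + Y \<omega> + Z \<omega>, X \<omega>))
      = dent M lborel (\<lambda>\<omega>. Y \<omega> + Z \<omega>) + dent M lborel X"
    unfolding e1 by (rule pair_dent[OF P FW FX I5[OF P ind]]) (use FQ1 in \<open>simp only: e1\<close>)
  have h2: "dent M (lborel \<Otimes>\<^sub>M lborel) (\<lambda>\<omega>. (X \<omega> + Y \<omega>, X \<omega>))
      = dent M lborel Y + dent M lborel X"
    unfolding e2 by (rule pair_dent[OF P FY FX I6[OF P ind]]) (use FQ2 in \<open>simp only: e2\<close>)
  show ?thesis
    using first unfolding mutinf_def h1 h2 by linarith
qed

end
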